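(* Let $A\in\mathbb{R}^{n\times d}$ have rows $a_1^\top,\dots,a_n^\top$, let $f_1,\dots,f_n:\mathbb{R}\to\mathbb{R}$ be convex and $(1/\gamma)$-smooth ($\gamma>0$), let $g:\mathbb{R}^d\to\mathbb{R}\cup\{+\infty\}$ be closed and $\mu$-strongly convex ($\mu>0$), and let $\bar R=\max_i\|a_i\|_2$. Consider the iterates of the SDAPD method (described in the context) and the potential $\tilde\phi_t$ with $\tilde\phi_t^*=\min_x\tilde\phi_t(x)$. Fix $t\ge0$ and assume $\eta(1+B_{t-1}\mu)\ge\beta_t$. Then $$\mathbb{E}_{\mathcal{F}_t}\big[\tilde\phi_{t+1}^*-\tilde\phi_t^*\big]\ge\beta_t\,\mathbb{E}_{\mathcal{F}_t}\Big[g(\bar{x}^{t+1})+\frac1n\langle\bar{y}^{t+1},A\bar{x}^{t+1}\rangle\Big]-\frac{\bar R^2\beta_t\eta}{2}\mathbb{E}_{\mathcal{F}_t}\big[\|y^{t+1}-y^t\|_2^2\big].$$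
   Context: $f_i^*$ is the convex conjugate of $f_i$; $\operatorname{prox}_h(u)=\arg\min_v\{h(v)+\frac12\|v-u\|_2^2\}$. SDAPD method: given $x^0\in\mathbb{R}^d$, $y^0\in\mathbb{R}^n$, $\eta,\tau>0$, $\beta_t>0$, set $B_t=\sum_{k=0}^t\beta_k$ (with $B_{-1}=0$). For $t=0,1,\dots$: sample $i_t$ uniformly from $\{1,\dots,n\}$ independently of the past; $\bar{x}^{t+1}=\operatorname{prox}_{\eta g}(x^t-\frac{\eta}{n}A^\top y^t)$; $y^{t+1}_i=\operatorname{prox}_{\tau f_i^*}(y_i^t+\tau\langle a_i,\bar{x}^{t+1}\rangle)$ if $i=i_t$, $y^{t+1}_i=y^t_i$ otherwise; $\bar{y}^{t+1}=y^t+n(y^{t+1}-y^t)$; $x^{t+1}=\operatorname{prox}_{B_tg}(x^0-\sum_{k=0}^t\frac{\beta_k}{n}A^\top\bar{y}^{k+1})$. Potential: $\tilde\phi_t(x)=\frac12\|x-x^0\|_2^2+\sum_{k=0}^{t-1}\beta_k\big(g(x)+\frac1n\langle\bar{y}^{k+1},Ax\rangle\big)$. $\mathcal{F}_t$ is the $\sigma$-field generated by all random variables up to iteration $t$ (so $x^t,y^t$ are $\mathcal{F}_t$-measurable and $i_t$ is independent of $\mathcal{F}_t$), and $\mathbb{E}_{\mathcal{F}_t}$ denotes conditional expectation given $\mathcal{F}_t$. *)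

theory Defs
  imports "HOL-Analysis.Analysis"
begin

text \<open>Proximal operator of an extended-real-valued function h:
  prox h u = argmin_v { h v + 1/2 ||v - u||^2 } (the minimiser is unique whenever
  it exists, e.g. for h closed proper strongly convex; we take it via SOME).\<close>
definition prox :: "('a::real_normed_vector \<Rightarrow> ereal) \<Rightarrow> 'a \<Rightarrow> 'a" where
  "prox h u = (SOME v. \<forall>w. h v + ereal (norm (v - u) ^ 2 / 2) \<le> h w + ereal (norm (w - u) ^ 2 / 2))"

definition conj_fun :: "(real \<Rightarrow> real) \<Rightarrow> real \<Rightarrow> ereal" where
  "conj_fun f y = (SUP x. ereal (y * x - f x))"

definition closed_fun :: "('a::topological_space \<Rightarrow> ereal) \<Rightarrow> bool" where
  "closed_fun g \<longleftrightarrow> closed {(x, r::real). g x \<le> ereal r}"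

definition strongly_convex_ext :: "real \<Rightarrow> ('a::real_normed_vector \<Rightarrow> ereal) \<Rightarrow> bool" where
  "strongly_convex_ext \<mu> g \<longleftrightarrow>
     (\<forall>x y. \<forall>l::real. 0 \<le> l \<and> l \<le> 1 \<longrightarrow>
        g (l *\<^sub>R x + (1 - l) *\<^sub>R y) + ereal (\<mu> / 2 * l * (1 - l) * norm (x - y) ^ 2)
          \<le> ereal l * g x + ereal (1 - l) * g y)"

definition smooth_fun :: "real \<Rightarrow> (real \<Rightarrow> real) \<Rightarrow> bool" where
  "smooth_fun L f \<longleftrightarrow> (\<forall>x. f differentiable (at x)) \<and>
      (\<forall>x y. \<bar>deriv f x - deriv f y\<bar> \<le> L * \<bar>x - y\<bar>)"

text \<open>B_t = sum_{k=0}^t beta_k; we use Bsum beta t = sum_{k<t} beta_k, so that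
  B_t = Bsum beta (t+1) and B_{-1} = Bsum beta 0 = 0.\<close>
definition Bsum :: "(nat \<Rightarrow> real) \<Rightarrow> nat \<Rightarrow> real" where
  "Bsum \<beta> t = (\<Sum>k<t. \<beta> k)"

text \<open>SDAPD iterates along a sample path ii : nat => 'n (ii t = i_t).
  State at time t: (x^t, y^t, s^t) with s^t = sum_{k<t} beta_k ybar^{k+1}.
  Indices 1..n are represented by the finite type 'n, n = CARD('n);
  A :: real^'d^'n has rows a_i = A $ i.\<close>
primrec sdapd :: "(real^('d::finite)^('n::finite)) \<Rightarrow> (real^'d \<Rightarrow> ereal) \<Rightarrow> ('n \<Rightarrow> real \<Rightarrow> real)
    \<Rightarrow> real \<Rightarrow> real \<Rightarrow> (nat \<Rightarrow> real) \<Rightarrow> (real^'d) \<Rightarrow> (real^'n) \<Rightarrow> (nat \<Rightarrow> 'n) \<Rightarrow> nat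
    \<Rightarrow> (real^'d) \<times> (real^'n) \<times> (real^'n)" where
  "sdapd A g f \<eta> \<tau> \<beta> x0 y0 ii 0 = (x0, y0, 0)"
| "sdapd A g f \<eta> \<tau> \<beta> x0 y0 ii (Suc t) =
    (case sdapd A g f \<eta> \<tau> \<beta> x0 y0 ii t of (x, y, s) \<Rightarrow>
      let n = real CARD('n);
          xb = prox (\<lambda>v. ereal \<eta> * g v) (x - (\<eta> / n) *\<^sub>R (transpose A *v y));
          y' = (\<chi> j. if j = ii t
                      then prox (\<lambda>v. ereal \<tau> * conj_fun (f j) v) (y $ j + \<tau> * (A $ j \<bullet> xb))
                      else y $ j);
          yb = y + n *\<^sub>R (y' - y);
          s' = s + \<beta> t *\<^sub>R yb;
          x' = prox (\<lambda>v. ereal (Bsum \<beta> (Suc t)) * g v) (x0 - (1 / n) *\<^sub>R (transpose A *v s'))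
      in (x', y', s'))"

definition sd_x where "sd_x A g f \<eta> \<tau> \<beta> x0 y0 ii t = fst (sdapd A g f \<eta> \<tau> \<beta> x0 y0 ii t)"
definition sd_y where "sd_y A g f \<eta> \<tau> \<beta> x0 y0 ii t = fst (snd (sdapd A g f \<eta> \<tau> \<beta> x0 y0 ii t))"

text \<open>sd_xbar ... t = xbar^{t+1} (depends only on x^t, y^t).\<close>
definition sd_xbar :: "(real^('d::finite)^('n::finite)) \<Rightarrow> (real^'d \<Rightarrow> ereal) \<Rightarrow> ('n \<Rightarrow> real \<Rightarrow> real)
    \<Rightarrow> real \<Rightarrow> real \<Rightarrow> (nat \<Rightarrow> real) \<Rightarrow> (real^'d) \<Rightarrow> (real^'n) \<Rightarrow> (nat \<Rightarrow> 'n) \<Rightarrow> nat \<Rightarrow> (real^'d)" where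
  "sd_xbar A g f \<eta> \<tau> \<beta> x0 y0 ii t =
     prox (\<lambda>v. ereal \<eta> * g v)
       (sd_x A g f \<eta> \<tau> \<beta> x0 y0 ii t - (\<eta> / real CARD('n)) *\<^sub>R (transpose A *v sd_y A g f \<eta> \<tau> \<beta> x0 y0 ii t))"

text \<open>sd_ybar ... t = ybar^{t+1} = y^t + n (y^{t+1} - y^t).\<close>
definition sd_ybar :: "(real^('d::finite)^('n::finite)) \<Rightarrow> (real^'d \<Rightarrow> ereal) \<Rightarrow> ('n \<Rightarrow> real \<Rightarrow> real)
    \<Rightarrow> real \<Rightarrow> real \<Rightarrow> (nat \<Rightarrow> real) \<Rightarrow> (real^'d) \<Rightarrow> (real^'n) \<Rightarrow> (nat \<Rightarrow> 'n) \<Rightarrow> nat \<Rightarrow> (real^'n)" where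
  "sd_ybar A g f \<eta> \<tau> \<beta> x0 y0 ii t =
     sd_y A g f \<eta> \<tau> \<beta> x0 y0 ii t
     + real CARD('n) *\<^sub>R (sd_y A g f \<eta> \<tau> \<beta> x0 y0 ii (Suc t) - sd_y A g f \<eta> \<tau> \<beta> x0 y0 ii t)"

definition sd_phi :: "(real^('d::finite)^('n::finite)) \<Rightarrow> (real^'d \<Rightarrow> ereal) \<Rightarrow> ('n \<Rightarrow> real \<Rightarrow> real)
    \<Rightarrow> real \<Rightarrow> real \<Rightarrow> (nat \<Rightarrow> real) \<Rightarrow> (real^'d) \<Rightarrow> (real^'n) \<Rightarrow> (nat \<Rightarrow> 'n) \<Rightarrow> nat \<Rightarrow> (real^'d) \<Rightarrow> ereal" where
  "sd_phi A g f \<eta> \<tau> \<beta> x0 y0 ii t x =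
     ereal (norm (x - x0) ^ 2 / 2)
     + (\<Sum>k<t. ereal (\<beta> k) * (g x + ereal (sd_ybar A g f \<eta> \<tau> \<beta> x0 y0 ii k \<bullet> (A *v x) / real CARD('n))))"

text \<open>phi~_t^* = min_x phi~_t(x) (written as an infimum; it is attained under the hypotheses).\<close>
definition sd_phistar where
  "sd_phistar A g f \<eta> \<tau> \<beta> x0 y0 ii t = (INF x. sd_phi A g f \<eta> \<tau> \<beta> x0 y0 ii t x)"

end

theory Submission
  imports Defs
begin


lemma min_on_compact:
  fixes F :: "'a::topological_space \<Rightarrow> ereal"
  assumes cl: "\<And>r. closed {x. F x \<le> ereal r}" and nm: "\<And>x. F x \<noteq> -\<infinity>"
    and K: "compact K" "K \<noteq> {}"
  shows "\<exists>z\<in>K. \<forall>x\<in>K. F z \<le> F x"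
proof -
  define m where "m = (INF x\<in>K. F x)"
  show ?thesis
  proof (cases "m = \<infinity>")
    case True
    obtain z where "z \<in> K" using K by auto
    moreover have "\<forall>x\<in>K. F x = \<infinity>"
    proof
      fix x assume "x \<in> K"
      then have "m \<le> F x" unfolding m_def by (rule INF_lower)
      then show "F x = \<infinity>" using True by simp
    qed
    ultimately show ?thesis by auto
  next
    case False
    have "K \<inter> (\<Inter>r\<in>{r. m < ereal r}. {x. F x \<le> ereal r}) \<noteq> {}"
    proof (rule compact_imp_fip_image[OF K(1)])
      show "closed {x. F x \<le> ereal r}" for r by (rule cl)
      fix I' assume I': "finite I'" "I' \<subseteq> {r. m < ereal r}"
      show "K \<inter> (\<Inter>r\<in>I'. {x. F x \<le> ereal r}) \<noteq> {}"
      proof (cases "I' = {}")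
        case True then show ?thesis using K by auto
      next
        case ne: False
        define r0 where "r0 = Min I'"
        have r0: "r0 \<in> I'" using I' ne r0_def by auto
        have "m < ereal r0" using r0 I' by auto
        then obtain x where x: "x \<in> K" "F x < ereal r0" unfolding m_def
          by (auto simp: INF_less_iff)
        have "\<forall>r\<in>I'. F x \<le> ereal r"
        proof
          fix r assume "r \<in> I'"
          then have "r0 \<le> r" using I' r0_def by auto
          then show "F x \<le> ereal r" using x by (meson ereal_less_eq(3) less_imp_le order_trans)
        qed
        then show ?thesis using x by auto
      qed
    qed
    then obtain z where z: "z \<in> K" "\<And>r. m < ereal r \<Longrightarrow> F z \<le> ereal r" by auto
    have "F z \<le> m"
    proof (rule dense_ge)
      fix y assume "m < y"
      then show "F z \<le> y"
      proof (cases y)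
        case (real r) then show ?thesis using z \<open>m < y\<close> by auto
      qed auto
    qed
    then show ?thesis using z unfolding m_def by (meson INF_lower order_trans)
  qed
qed



lemma closed_sub_fun:
  fixes g :: "'a::topological_space \<Rightarrow> ereal"
  assumes "closed_fun g" "continuous_on UNIV h"
  shows "closed {v. g v \<le> ereal (h v)}"
proof -
  have "{v. g v \<le> ereal (h v)} = (\<lambda>v. (v, h v)) -` {(x, r::real). g x \<le> ereal r}" by auto
  moreover have "closed ((\<lambda>v. (v, h v)) -` {(x, r::real). g x \<le> ereal r})"
    using assms unfolding closed_fun_def
    by (intro closed_vimage) (auto intro!: continuous_intros)
  ultimately show ?thesis by simp
qed

lemma sublevel_closed:
  fixes g :: "'a::real_normed_vector \<Rightarrow> ereal"
  assumes "closed_fun g" "c > 0"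
  shows "closed {v. ereal c * g v + ereal (norm (v - u)^2/2) \<le> ereal r}"
proof -
  have "{v. ereal c * g v + ereal (norm (v - u)^2/2) \<le> ereal r}
      = {v. g v \<le> ereal ((r - norm (v - u)^2/2) / c)}"
  proof (intro Collect_cong)
    fix v show "(ereal c * g v + ereal (norm (v - u)^2/2) \<le> ereal r) = (g v \<le> ereal ((r - norm (v - u)^2/2) / c))"
    proof (cases "g v")
      case (real a) then show ?thesis using assms(2) by (auto simp: pos_le_divide_eq algebra_simps)
    next
      case PInf then show ?thesis using assms(2) by auto
    next
      case MInf
      have "ereal c * g v = -\<infinity>" using MInf assms(2) by simp
      then show ?thesis using MInf by simp
    qed
  qed
  moreover have "closed {v. g v \<le> ereal ((r - norm (v - u)^2/2) / c)}"
    using assms(2) by (intro closed_sub_fun[OF assms(1)]) (auto intro!: continuous_intros)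
  ultimately show ?thesis by simp
qed



lemma g_lower:
  fixes g :: "'a::euclidean_space \<Rightarrow> ereal"
  assumes cl: "closed_fun g" and nm: "\<forall>x. g x \<noteq> -\<infinity>" and g1: "g x1 = ereal a1"
    and sc: "strongly_convex_ext \<mu> g" and mu: "\<mu> \<ge> 0"
  shows "\<exists>L K0. K0 \<ge> 0 \<and> (\<forall>x. g x \<ge> ereal (L - K0 * norm (x - x1)))"
proof -
  have "\<exists>z\<in>cball x1 1. \<forall>x\<in>cball x1 1. g z \<le> g x"
  proof (rule min_on_compact)
    show "closed {x. g x \<le> ereal r}" for r
      using closed_sub_fun[OF cl, of "\<lambda>_. r"] by simp
  qed (use nm in auto)
  then obtain z where z: "z \<in> cball x1 1" "\<And>x. x \<in> cball x1 1 \<Longrightarrow> g z \<le> g x" by blast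
  have "g z \<le> ereal a1" using z(2)[of x1] g1 by simp
  then obtain m0 where m0: "g z = ereal m0" using nm by (cases "g z") auto
  have "m0 \<le> a1" using \<open>g z \<le> ereal a1\<close> m0 by simp
  have "\<forall>x. g x \<ge> ereal (m0 - (a1 - m0) * norm (x - x1))"
  proof
    fix x
    show "g x \<ge> ereal (m0 - (a1 - m0) * norm (x - x1))"
    proof (cases "norm (x - x1) \<le> 1")
      case True
      then have "g z \<le> g x" using z(2)[of x] by (simp add: dist_norm norm_minus_commute)
      moreover have "m0 - (a1 - m0) * norm (x - x1) \<le> m0" using \<open>m0 \<le> a1\<close> by simp
      ultimately show ?thesis using m0 by (metis ereal_less_eq(3) order_trans)
    next
      case False
      define D where "D = norm (x - x1)"
      have D1: "D > 1" using False D_def by simp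
      show ?thesis
      proof (cases "g x")
        case PInf then show ?thesis by simp
      next
        case MInf then show ?thesis using nm by simp
      next
        case (real b)
        define l where "l = 1 / D"
        have l01: "0 \<le> l" "l \<le> 1" using D1 l_def by auto
        define zz where "zz = l *\<^sub>R x + (1 - l) *\<^sub>R x1"
        have "zz - x1 = l *\<^sub>R (x - x1)" unfolding zz_def by (simp add: algebra_simps)
        then have "norm (zz - x1) = 1" using D1 l_def D_def by auto
        then have "g z \<le> g zz" using z(2)[of zz] by (simp add: dist_norm norm_minus_commute)
        have "g zz + ereal (\<mu> / 2 * l * (1 - l) * norm (x - x1) ^ 2)
          \<le> ereal l * g x + ereal (1 - l) * g x1"
          using sc l01 unfolding strongly_convex_ext_def zz_def by blast
        moreover have "ereal (\<mu> / 2 * l * (1 - l) * norm (x - x1) ^ 2) \<ge> 0"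
          using mu l01 by simp
        ultimately have "g zz \<le> ereal (l * b + (1 - l) * a1)"
          using real g1 by (metis add_increasing2 ereal_le_real order_trans ereal_less_eq(3) times_ereal.simps(1) plus_ereal.simps(1) ereal_le_add_self order_refl)
        then have "m0 \<le> l * b + (1 - l) * a1" using \<open>g z \<le> g zz\<close> m0 by (metis ereal_less_eq(3) order_trans)
        then have "D * m0 \<le> b + (D - 1) * a1" using D1 unfolding l_def
          by (simp add: field_simps)
        then have "a1 - (a1 - m0) * D \<le> b" by (simp add: algebra_simps)
        then have "m0 - (a1 - m0) * D \<le> b" using \<open>m0 \<le> a1\<close> by linarith
        then show ?thesis using real D_def by simp
      qed
    qed
  qed
  then show ?thesis using \<open>m0 \<le> a1\<close> by (intro exI[of _ m0] exI[of _ "a1 - m0"]) auto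
qed



lemma coerc_real:
  fixes c L K0 D e n F1 :: real
  assumes "c > 0" "K0 \<ge> 0" "D > e + 2 * (c*K0) + 2 * \<bar>c*K0*e + F1 - c*L\<bar> + 2" "e \<ge> 0"
    "n \<ge> D - e"
  shows "c * (L - K0 * D) + n^2/2 > F1"
proof -
  define s where "s = D - e"
  define al where "al = c * K0"
  define be where "be = \<bar>c*K0*e + F1 - c*L\<bar>"
  have al0: "al \<ge> 0" using assms unfolding al_def by simp
  have s1: "s > 2*al + 2*be + 2" using assms unfolding s_def al_def be_def by simp
  have be0: "be \<ge> 0" unfolding be_def by simp
  have "s^2 \<le> n^2" using assms s1 al0 be0 unfolding s_def by (intro power_mono) auto
  have "s * s \<ge> s * (2*al + 2*be + 2)" using s1 al0 be0 by (intro mult_left_mono) auto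
  then have "s^2/2 \<ge> s * (al + be + 1)" by (simp add: power2_eq_square algebra_simps)
  moreover have "s * (al + be + 1) \<ge> al * s + be + 1"
  proof -
    have "be * 1 \<le> be * s" using be0 s1 al0 by (intro mult_left_mono) auto
    then show ?thesis using s1 al0 be0 by (simp add: algebra_simps)
  qed
  ultimately have "n^2/2 \<ge> al * s + be + 1" using \<open>s^2 \<le> n^2\<close> by linarith
  moreover have "be \<ge> c*K0*e + F1 - c*L" unfolding be_def by simp
  ultimately show ?thesis unfolding s_def al_def by (simp add: algebra_simps)
qed

lemma prox_exists:
  fixes g :: "'a::euclidean_space \<Rightarrow> ereal"
  assumes cl: "closed_fun g" and nm: "\<forall>x. g x \<noteq> -\<infinity>" and pr: "\<exists>x. g x \<noteq> \<infinity>"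
    and sc: "strongly_convex_ext \<mu> g" and mu: "\<mu> \<ge> 0" and c: "c > 0"
  shows "\<exists>z. \<forall>w. ereal c * g z + ereal (norm (z - u)^2/2) \<le> ereal c * g w + ereal (norm (w - u)^2/2)"
proof -
  define F where "F = (\<lambda>v. ereal c * g v + ereal (norm (v - u)^2/2))"
  obtain x1 where "g x1 \<noteq> \<infinity>" using pr by auto
  then obtain a1 where g1: "g x1 = ereal a1" using nm by (cases "g x1") auto
  obtain L K0 where K0: "K0 \<ge> 0" and low: "\<And>x. g x \<ge> ereal (L - K0 * norm (x - x1))"
    using g_lower[OF cl nm g1 sc mu] by blast
  define e where "e = norm (x1 - u)"
  define F1 where "F1 = c * a1 + norm (x1 - u)^2/2"
  have F1: "F x1 = ereal F1" unfolding F_def F1_def g1 by simp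
  define R where "R = e + 2 * (c*K0) + 2 * \<bar>c*K0*e + F1 - c*L\<bar> + 2"
  have far: "F x > ereal F1" if "norm (x - x1) > R" for x
  proof (cases "g x")
    case PInf then show ?thesis using c unfolding F_def by simp
  next
    case MInf then show ?thesis using nm by simp
  next
    case (real b)
    have "b \<ge> L - K0 * norm (x - x1)" using low[of x] real by simp
    then have "c * b \<ge> c * (L - K0 * norm (x - x1))" using c by (simp add: mult_left_mono)
    moreover have "c * (L - K0 * norm (x - x1)) + norm (x - u)^2/2 > F1"
    proof (rule coerc_real[OF c K0])
      show "norm (x - x1) > e + 2 * (c*K0) + 2 * \<bar>c*K0*e + F1 - c*L\<bar> + 2" using that R_def by simp
      show "e \<ge> 0" unfolding e_def by simp
      have "norm (x - x1) \<le> norm (x - u) + norm (x1 - u)" by (metis norm_diff_triangle_le order_refl norm_minus_commute)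
      then show "norm (x - u) \<ge> norm (x - x1) - e" unfolding e_def by simp
    qed
    ultimately show ?thesis unfolding F_def real by simp
  qed
  have "\<exists>z\<in>cball x1 R. \<forall>x\<in>cball x1 R. F z \<le> F x"
  proof (rule min_on_compact)
    show "closed {x. F x \<le> ereal r}" for r unfolding F_def by (rule sublevel_closed[OF cl c])
    show "F x \<noteq> -\<infinity>" for x using nm c unfolding F_def by (cases "g x") auto
    have "R \<ge> 0" unfolding R_def e_def using c K0 by simp
    then show "cball x1 R \<noteq> {}" by simp
  qed auto
  then obtain z where z: "z \<in> cball x1 R" "\<And>x. x \<in> cball x1 R \<Longrightarrow> F z \<le> F x" by blast
  have "\<forall>w. F z \<le> F w"
  proof
    fix w
    show "F z \<le> F w"
    proof (cases "w \<in> cball x1 R")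
      case True then show ?thesis using z by simp
    next
      case False
      then have "norm (w - x1) > R" by (simp add: dist_norm norm_minus_commute)
      then have "F w > F x1" using far F1 by simp
      moreover have "x1 \<in> cball x1 R" using z(1) by (metis centre_in_cball dist_not_less_zero mem_cball order_le_less_trans not_le)
      ultimately show ?thesis using z(2)[of x1] by simp
    qed
  qed
  then show ?thesis unfolding F_def by blast
qed



lemma limit_le:
  fixes a b k :: real
  assumes "k \<ge> 0" "\<And>l. 0 < l \<Longrightarrow> l \<le> 1 \<Longrightarrow> b - l * k \<le> a"
  shows "b \<le> a"
proof (rule ccontr)
  assume "\<not> b \<le> a"
  then have ab: "a < b" by simp
  show False
  proof (cases "k = 0")
    case True then show False using assms(2)[of 1] ab by simp
  next
    case False
    then have kp: "k > 0" using assms(1) by simp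
    define l where "l = min 1 ((b - a) / (2*k))"
    have l0: "0 < l" "l \<le> 1" using ab kp l_def by auto
    have "l * k \<le> ((b - a) / (2*k)) * k" using kp l_def by (intro mult_right_mono) auto
    also have "\<dots> = (b - a)/2" using kp by (simp add: field_simps)
    finally have lk: "l * k \<le> (b - a) / 2" .
    have "b - l * k \<le> a" using assms(2)[OF l0] .
    then show False using lk ab by argo
  qed
qed

lemma quad_identity0:
  fixes a b :: "'a::real_inner" and l :: real
  shows "norm (l *\<^sub>R a + (1 - l) *\<^sub>R b)^2 / 2
    = l * (norm a^2/2) + (1 - l) * (norm b^2/2) - 1/2 * l * (1 - l) * norm (a - b)^2"
  unfolding power2_norm_eq_inner
  by (simp add: inner_add_left inner_add_right inner_diff_left inner_diff_right
        inner_commute field_simps)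

lemma quad_identity:
  fixes x z w :: "'a::real_inner" and l :: real
  shows "norm (l *\<^sub>R x + (1 - l) *\<^sub>R z - w)^2 / 2
    = l * (norm (x - w)^2/2) + (1 - l) * (norm (z - w)^2/2) - 1/2 * l * (1 - l) * norm (x - z)^2"
proof -
  have e: "l *\<^sub>R x + (1 - l) *\<^sub>R z - w = l *\<^sub>R (x - w) + (1 - l) *\<^sub>R (z - w)"
    by (simp add: algebra_simps)
  have e2: "x - z = (x - w) - (z - w)" by simp
  show ?thesis unfolding e by (subst e2) (rule quad_identity0)
qed

lemma growth:
  fixes g :: "'a::real_inner \<Rightarrow> ereal"
  assumes sc: "strongly_convex_ext \<mu> g" and mu: "\<mu> \<ge> 0" and c: "c \<ge> 0"
    and nm: "\<forall>x. g x \<noteq> -\<infinity>" and fin: "ereal c * g z \<noteq> \<infinity>"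
    and mn: "\<forall>v. ereal c * g z + ereal (norm (z - w)^2/2) \<le> ereal c * g v + ereal (norm (v - w)^2/2)"
  shows "ereal c * g x + ereal (norm (x - w)^2/2)
    \<ge> ereal c * g z + ereal (norm (z - w)^2/2) + ereal ((1 + c*\<mu>)/2 * norm (x - z)^2)"
proof -
  have "ereal c * g z \<noteq> -\<infinity>" using nm c by (cases "g z"; cases "c = 0") auto
  then obtain Gz where Gz: "ereal c * g z = ereal Gz" using fin by (cases "ereal c * g z") auto
  show ?thesis
  proof (cases "ereal c * g x = \<infinity>")
    case True
    then have "ereal c * g x + ereal (norm (x - w)^2/2) = \<infinity>" by simp
    then show ?thesis by (metis ereal_less_eq(1))
  next
    case False
    have "ereal c * g x \<noteq> -\<infinity>" using nm c by (cases "g x"; cases "c = 0") auto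
    then obtain Gx where Gx: "ereal c * g x = ereal Gx" using False by (cases "ereal c * g x") auto
    define D where "D = norm (x - z)"
    define Qx where "Qx = norm (x - w)^2/2"
    define Qz where "Qz = norm (z - w)^2/2"
    have key: "Gz + Qz \<le> l * Gx + (1 - l) * Gz - c * \<mu> / 2 * l * (1 - l) * D^2
        + (l * Qx + (1 - l) * Qz - 1/2 * l * (1 - l) * D^2)" if l: "0 < l" "l \<le> 1" for l
    proof -
      define m where "m = l *\<^sub>R x + (1 - l) *\<^sub>R z"
      have Gm: "ereal c * g m \<le> ereal (l * Gx + (1 - l) * Gz - c * \<mu> / 2 * l * (1 - l) * D^2)"
      proof (cases "c = 0")
        case True then show ?thesis using Gx Gz by (simp add: zero_ereal_def[symmetric])
      next
        case False
        then have cp: "c > 0" using c by simp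
        obtain gx where gx: "g x = ereal gx" using Gx cp nm by (cases "g x") auto
        obtain gz where gz: "g z = ereal gz" using Gz cp nm by (cases "g z") auto
        have "g m + ereal (\<mu> / 2 * l * (1 - l) * norm (x - z) ^ 2) \<le> ereal l * g x + ereal (1 - l) * g z"
          using sc l unfolding strongly_convex_ext_def m_def by auto
        then have "g m \<le> ereal (l * gx + (1 - l) * gz - \<mu> / 2 * l * (1 - l) * D^2)"
          using gx gz nm unfolding D_def by (cases "g m") auto
        then have "ereal c * g m \<le> ereal c * ereal (l * gx + (1 - l) * gz - \<mu> / 2 * l * (1 - l) * D^2)"
          using cp by (intro ereal_mult_left_mono) auto
        moreover have "Gx = c * gx" "Gz = c * gz" using Gx Gz gx gz by auto
        ultimately show ?thesis by (simp add: algebra_simps)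
      qed
      have "ereal Gz + ereal Qz \<le> ereal c * g m + ereal (norm (m - w)^2/2)"
        using mn Gz unfolding Qz_def by metis
      also have "\<dots> \<le> ereal (l * Gx + (1 - l) * Gz - c * \<mu> / 2 * l * (1 - l) * D^2) + ereal (norm (m - w)^2/2)"
        using Gm by (rule add_right_mono)
      finally have "Gz + Qz \<le> l * Gx + (1 - l) * Gz - c * \<mu> / 2 * l * (1 - l) * D^2 + norm (m - w)^2/2"
        by simp
      moreover have "norm (m - w)^2/2 = l * Qx + (1 - l) * Qz - 1/2 * l * (1 - l) * D^2"
        unfolding m_def Qx_def Qz_def D_def by (rule quad_identity)
      ultimately show ?thesis by simp
    qed
    have "Gz + Qz + (1 + c*\<mu>)/2 * D^2 \<le> Gx + Qx"
    proof (rule limit_le[where k = "(1 + c*\<mu>)/2 * D^2"])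
      show "0 \<le> (1 + c*\<mu>)/2 * D^2" using c mu by simp
      fix l :: real assume l: "0 < l" "l \<le> 1"
      have "l * (Gz + Qz) \<le> l * (Gx + Qx) - (1 + c*\<mu>)/2 * l * (1 - l) * D^2"
        using key[OF l] by (simp add: field_simps)
      then have "l * (Gz + Qz + (1 + c*\<mu>)/2 * (1 - l) * D^2) \<le> l * (Gx + Qx)"
        by (simp add: algebra_simps)
      then have "Gz + Qz + (1 + c*\<mu>)/2 * (1 - l) * D^2 \<le> Gx + Qx"
        using l by simp
      then show "Gz + Qz + (1 + c*\<mu>)/2 * D^2 - l * ((1 + c*\<mu>)/2 * D^2) \<le> Gx + Qx"
        by (simp add: field_simps)
    qed
    then show ?thesis using Gx Gz unfolding Qx_def Qz_def D_def by simp
  qed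
qed



lemma single_coord:
  fixes d :: "real^'n"
  assumes "\<And>i. i \<noteq> i0 \<Longrightarrow> d $ i = 0"
  shows "norm d ^ 2 = (d $ i0)^2" "d \<bullet> w = d $ i0 * w $ i0"
proof -
  have dd: "d $ i = (if i = i0 then d $ i0 else 0)" for i using assms by auto
  have gen: "d \<bullet> w = d $ i0 * w $ i0" for w
  proof -
    have "d \<bullet> w = (\<Sum>i\<in>UNIV. d $ i * w $ i)" by (simp add: inner_vec_def)
    also have "\<dots> = (\<Sum>i\<in>UNIV. (if i = i0 then d $ i0 * w $ i0 else 0))"
      by (rule sum.cong) (auto simp: assms)
    finally show ?thesis by simp
  qed
  then show "d \<bullet> w = d $ i0 * w $ i0" .
  have "norm d ^ 2 = d \<bullet> d" by (rule power2_norm_eq_inner)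
  also have "\<dots> = (d $ i0)^2" using gen[of d] by (simp add: power2_eq_square)
  finally show "norm d ^ 2 = (d $ i0)^2" .
qed

lemma norm_add_sq: "norm (a + e :: 'a::real_inner)^2 = norm a^2 + 2 * (a \<bullet> e) + norm e^2"
  unfolding power2_norm_eq_inner by (simp add: inner_add_left inner_add_right inner_commute)

lemma core:
  fixes A :: "real^'d^'n" and x xb X :: "real^'d" and Y Y' :: "real^'n"
  assumes eta: "\<eta> > 0" and bet: "\<beta> > 0" and stp: "\<beta> \<le> \<eta> * \<sigma>" and np: "n > 0"
    and opt: "\<eta> * gx + norm (x - u)^2/2 \<ge> \<eta> * gb + norm (xb - u)^2/2 + norm (x - xb)^2/2"
    and u: "u = X - (\<eta> / n) *\<^sub>R (transpose A *v Y)"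
    and yb: "ybar = Y + n *\<^sub>R (Y' - Y)"
    and single: "\<And>i. i \<noteq> i0 \<Longrightarrow> Y' $ i = Y $ i"
    and R: "\<And>i. norm (A $ i) \<le> Rb"
  shows "\<sigma>/2 * norm (x - X)^2 + \<beta> * (gx + ybar \<bullet> (A *v x) / n)
     \<ge> \<beta> * (gb + ybar \<bullet> (A *v xb) / n) - Rb^2 * \<beta> * \<eta> / 2 * norm (Y' - Y)^2"
proof -
  define e where "e = (\<eta> / n) *\<^sub>R (transpose A *v Y)"
  have ex: "z \<bullet> e = (\<eta> / n) * (Y \<bullet> (A *v z))" for z
  proof -
    have "z \<bullet> (Y v* A) = Y \<bullet> (A *v z)" by (metis inner_commute dot_lmul_matrix)
    then show ?thesis unfolding e_def by simp
  qed
  have h1: "x - u = (x - X) + e" and h2: "xb - u = (xb - X) + e" unfolding u e_def by auto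
  have nx: "norm (x - u)^2 = norm (x - X)^2 + 2 * ((x - X) \<bullet> e) + norm e^2"
    unfolding h1 by (rule norm_add_sq)
  have nb: "norm (xb - u)^2 = norm (xb - X)^2 + 2 * ((xb - X) \<bullet> e) + norm e^2"
    unfolding h2 by (rule norm_add_sq)
  have ie: "(x - X) \<bullet> e - (xb - X) \<bullet> e = (\<eta> / n) * (Y \<bullet> (A *v x)) - (\<eta> / n) * (Y \<bullet> (A *v xb))"
    by (simp add: inner_diff_left ex matrix_vector_mult_diff_distrib inner_diff_right algebra_simps diff_divide_distrib)
  define v where "v = x - xb"
  define P where "P = Y \<bullet> (A *v x) / n"
  define Pb where "Pb = Y \<bullet> (A *v xb) / n"
  have ie2: "(x - X) \<bullet> e - (xb - X) \<bullet> e = \<eta> * P - \<eta> * Pb" unfolding ie P_def Pb_def by simp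
  have step1: "\<eta> * (gx + P) + norm (x - X)^2/2 \<ge> \<eta> * (gb + Pb) + norm v^2/2"
  proof -
    have nn: "norm (xb - X)^2 \<ge> 0" by simp
    have "\<eta>*gx + \<eta>*P + norm (x - X)^2/2 \<ge> \<eta>*gb + \<eta>*Pb + norm v^2/2"
      using opt ie2 nx nb nn unfolding v_def by argo
    then show ?thesis by (simp add: algebra_simps)
  qed
  then have step2: "(\<beta>/\<eta>) * (\<eta> * (gx + P) + norm (x - X)^2/2) \<ge> (\<beta>/\<eta>) * (\<eta> * (gb + Pb) + norm v^2/2)"
    using eta bet by (intro mult_left_mono) auto
  then have step3: "\<beta> * (gx + P) + \<beta> / (2*\<eta>) * norm (x - X)^2 \<ge> \<beta> * (gb + Pb) + \<beta> / (2*\<eta>) * norm v^2"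
    using eta by (simp add: field_simps)
  have sg: "\<sigma>/2 * norm (x - X)^2 \<ge> \<beta> / (2*\<eta>) * norm (x - X)^2"
  proof (rule mult_right_mono)
    show "\<beta> / (2*\<eta>) \<le> \<sigma>/2" using stp eta by (simp add: field_simps)
  qed simp
  define d where "d = Y' - Y"
  have d0: "\<And>i. i \<noteq> i0 \<Longrightarrow> d $ i = 0" unfolding d_def using single by simp
  define \<delta> where "\<delta> = d $ i0"
  have ybx: "ybar \<bullet> (A *v z) / n = Y \<bullet> (A *v z) / n + d \<bullet> (A *v z)" for z
  proof -
    have "ybar \<bullet> (A *v z) = Y \<bullet> (A *v z) + n * (d \<bullet> (A *v z))"
      unfolding yb d_def by (simp only: inner_add_left inner_scaleR_left)
    then show ?thesis using np by (simp add: field_simps)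
  qed
  have dv: "d \<bullet> (A *v x) - d \<bullet> (A *v xb) = \<delta> * (A $ i0 \<bullet> v)"
  proof -
    have "d \<bullet> (A *v x) - d \<bullet> (A *v xb) = d \<bullet> (A *v v)"
      unfolding v_def by (simp add: matrix_vector_mult_diff_distrib inner_diff_right)
    also have "\<dots> = \<delta> * (A $ i0 \<bullet> v)" using single_coord(2)[OF d0] \<delta>_def
      by (simp add: matrix_vector_mul_component)
    finally show ?thesis .
  qed
  have nd: "norm d ^2 = \<delta>^2" using single_coord(1)[OF d0] \<delta>_def by simp
  have cs: "\<bar>A $ i0 \<bullet> v\<bar> \<le> Rb * norm v"
    using Cauchy_Schwarz_ineq2[of "A $ i0" v] R[of i0] by (meson mult_right_mono norm_ge_zero order_trans)
  have amgm: "norm v^2 / (2*\<eta>) + \<delta> * (A $ i0 \<bullet> v) \<ge> - (Rb^2 * \<eta> / 2 * \<delta>^2)"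
  proof -
    have "\<bar>\<delta> * (A $ i0 \<bullet> v)\<bar> \<le> \<bar>\<delta>\<bar> * (Rb * norm v)"
      using cs by (simp add: abs_mult mult_left_mono)
    moreover have "2 * \<eta> * (\<bar>\<delta>\<bar> * (Rb * norm v)) \<le> norm v^2 + (\<eta> * Rb * \<bar>\<delta>\<bar>)^2"
    proof -
      have "0 \<le> (norm v - \<eta> * Rb * \<bar>\<delta>\<bar>)^2" by simp
      then show ?thesis by (simp add: power2_eq_square algebra_simps)
    qed
    moreover have "2 * \<eta> * (- (\<delta> * (A $ i0 \<bullet> v))) \<le> 2 * \<eta> * \<bar>\<delta> * (A $ i0 \<bullet> v)\<bar>"
      using eta by (intro mult_left_mono) auto
    moreover have "2 * \<eta> * \<bar>\<delta> * (A $ i0 \<bullet> v)\<bar> \<le> 2 * \<eta> * (\<bar>\<delta>\<bar> * (Rb * norm v))"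
      using eta calculation(1) by (intro mult_left_mono) auto
    moreover have "(\<eta> * Rb * \<bar>\<delta>\<bar>)^2 = \<eta>^2 * Rb^2 * \<delta>^2"
      by (simp add: power_mult_distrib)
    ultimately have "2 * \<eta> * (- (\<delta> * (A $ i0 \<bullet> v))) \<le> norm v^2 + \<eta>^2 * Rb^2 * \<delta>^2"
      by linarith
    then show ?thesis using eta by (simp add: field_simps power2_eq_square)
  qed
  have "\<beta> * (norm v^2 / (2*\<eta>) + \<delta> * (A $ i0 \<bullet> v)) \<ge> \<beta> * (- (Rb^2 * \<eta> / 2 * \<delta>^2))"
    using amgm bet by (intro mult_left_mono) auto
  then have f3: "\<beta> * (norm v^2 / (2*\<eta>)) + \<beta> * (\<delta> * (A $ i0 \<bullet> v)) \<ge> - (Rb^2 * \<beta> * \<eta> / 2 * \<delta>^2)"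
    by (simp add: algebra_simps)
  have f1: "\<beta> * gx + \<beta> * P + \<beta> / (2*\<eta>) * norm (x - X)^2 \<ge> \<beta> * gb + \<beta> * Pb + \<beta> * (norm v^2 / (2*\<eta>))"
    using step3 by (simp add: algebra_simps)
  have f4: "\<beta> * (gx + ybar \<bullet> (A *v x) / n) = \<beta> * gx + \<beta> * P + \<beta> * (d \<bullet> (A *v xb)) + \<beta> * (\<delta> * (A $ i0 \<bullet> v))"
    using ybx[of x] dv unfolding P_def by (simp add: algebra_simps)
  have f5: "\<beta> * (gb + ybar \<bullet> (A *v xb) / n) = \<beta> * gb + \<beta> * Pb + \<beta> * (d \<bullet> (A *v xb))"
    using ybx[of xb] unfolding Pb_def by (simp add: algebra_simps)
  have f6: "Rb^2 * \<beta> * \<eta> / 2 * norm (Y' - Y)^2 = Rb^2 * \<beta> * \<eta> / 2 * \<delta>^2"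
    using nd d_def by simp
  show ?thesis unfolding f4 f5 f6 using f1 f3 sg by linarith
qed



lemma sdapd_indep:
  "(\<forall>k<t. p k = q k) \<Longrightarrow> sdapd A g f \<eta> \<tau> \<beta> x0 y0 p t = sdapd A g f \<eta> \<tau> \<beta> x0 y0 q t"
  by (induction t) auto

lemma sdapd_Suc_facts:
  fixes A :: "real^('d::finite)^('n::finite)"
  shows "i \<noteq> p t \<Longrightarrow> sd_y A g f \<eta> \<tau> \<beta> x0 y0 p (Suc t) $ i = sd_y A g f \<eta> \<tau> \<beta> x0 y0 p t $ i"
    and "snd (snd (sdapd A g f \<eta> \<tau> \<beta> x0 y0 p (Suc t)))
        = snd (snd (sdapd A g f \<eta> \<tau> \<beta> x0 y0 p t)) + \<beta> t *\<^sub>R sd_ybar A g f \<eta> \<tau> \<beta> x0 y0 p t"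
    and "sd_x A g f \<eta> \<tau> \<beta> x0 y0 p (Suc t) = prox (\<lambda>v. ereal (Bsum \<beta> (Suc t)) * g v)
        (x0 - (1 / real CARD('n)) *\<^sub>R (transpose A *v snd (snd (sdapd A g f \<eta> \<tau> \<beta> x0 y0 p (Suc t)))))"
proof -
  obtain x y s where e: "sdapd A g f \<eta> \<tau> \<beta> x0 y0 p t = (x, y, s)" by (cases "sdapd A g f \<eta> \<tau> \<beta> x0 y0 p t") auto
  show "i \<noteq> p t \<Longrightarrow> sd_y A g f \<eta> \<tau> \<beta> x0 y0 p (Suc t) $ i = sd_y A g f \<eta> \<tau> \<beta> x0 y0 p t $ i"
    by (simp add: sd_y_def e Let_def)
  show "snd (snd (sdapd A g f \<eta> \<tau> \<beta> x0 y0 p (Suc t)))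
        = snd (snd (sdapd A g f \<eta> \<tau> \<beta> x0 y0 p t)) + \<beta> t *\<^sub>R sd_ybar A g f \<eta> \<tau> \<beta> x0 y0 p t"
    by (simp add: sd_y_def sd_ybar_def e Let_def)
  show "sd_x A g f \<eta> \<tau> \<beta> x0 y0 p (Suc t) = prox (\<lambda>v. ereal (Bsum \<beta> (Suc t)) * g v)
        (x0 - (1 / real CARD('n)) *\<^sub>R (transpose A *v snd (snd (sdapd A g f \<eta> \<tau> \<beta> x0 y0 p (Suc t)))))"
    by (simp add: sd_x_def e Let_def)
qed

lemma sdapd_s:
  "snd (snd (sdapd A g f \<eta> \<tau> \<beta> x0 y0 p t)) = (\<Sum>k<t. \<beta> k *\<^sub>R sd_ybar A g f \<eta> \<tau> \<beta> x0 y0 p k)"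
proof (induction t)
  case 0 then show ?case by simp
next
  case (Suc t) then show ?case by (subst sdapd_Suc_facts(2)) simp
qed

lemma sd_phi_Suc:
  fixes A :: "real^('d::finite)^('n::finite)"
  shows
  "sd_phi A g f \<eta> \<tau> \<beta> x0 y0 p (Suc t) x = sd_phi A g f \<eta> \<tau> \<beta> x0 y0 p t x
     + ereal (\<beta> t) * (g x + ereal (sd_ybar A g f \<eta> \<tau> \<beta> x0 y0 p t \<bullet> (A *v x) / real CARD('n)))"
  unfolding sd_phi_def by (simp add: add.assoc)

lemma sd_phi_rep:
  fixes A :: "real^('d::finite)^('n::finite)" and g :: "real^'d \<Rightarrow> ereal" and f \<eta> \<tau> \<beta> x0 y0 p t
  assumes bpos: "\<forall>k. \<beta> k > 0" and nm: "g x \<noteq> -\<infinity>"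
  defines "S \<equiv> snd (snd (sdapd A g f \<eta> \<tau> \<beta> x0 y0 p t))"
  defines "v \<equiv> (1 / real CARD('n)) *\<^sub>R (transpose A *v S)"
  shows "sd_phi A g f \<eta> \<tau> \<beta> x0 y0 p t x = ereal (Bsum \<beta> t) * g x + ereal (norm (x - (x0 - v))^2/2)
     + ereal (x0 \<bullet> v - norm v^2/2)"
proof (cases "g x")
  case (real r)
  define n where "n = real CARD('n)"
  have np: "n > 0" unfolding n_def by simp
  have xv: "x \<bullet> v = S \<bullet> (A *v x) / n"
  proof -
    have "x \<bullet> (S v* A) = S \<bullet> (A *v x)" by (metis inner_commute dot_lmul_matrix)
    then show ?thesis unfolding v_def n_def by simp
  qed
  have Ssum: "S \<bullet> (A *v x) = (\<Sum>k<t. \<beta> k * (sd_ybar A g f \<eta> \<tau> \<beta> x0 y0 p k \<bullet> (A *v x)))"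
    unfolding S_def sdapd_s by (simp add: inner_sum_left)
  have "sd_phi A g f \<eta> \<tau> \<beta> x0 y0 p t x = ereal (norm (x - x0)^2/2
      + (\<Sum>k<t. \<beta> k * (r + sd_ybar A g f \<eta> \<tau> \<beta> x0 y0 p k \<bullet> (A *v x) / n)))"
    unfolding sd_phi_def real n_def by simp
  also have "(\<Sum>k<t. \<beta> k * (r + sd_ybar A g f \<eta> \<tau> \<beta> x0 y0 p k \<bullet> (A *v x) / n))
      = Bsum \<beta> t * r + S \<bullet> (A *v x) / n"
    unfolding Ssum Bsum_def by (simp add: algebra_simps sum.distrib sum_distrib_left sum_distrib_right sum_divide_distrib)
  also have "x - (x0 - v) = (x - x0) + v" by simp
  have "norm (x - (x0 - v))^2 = norm (x - x0)^2 + 2 * ((x - x0) \<bullet> v) + norm v^2"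
    unfolding \<open>x - (x0 - v) = (x - x0) + v\<close>
    unfolding power2_norm_eq_inner by (simp add: inner_add_left inner_add_right inner_commute)
  then have "norm (x - x0)^2/2 + (Bsum \<beta> t * r + S \<bullet> (A *v x) / n)
      = Bsum \<beta> t * r + norm (x - (x0 - v))^2/2 + (x0 \<bullet> v - norm v^2/2)"
    using xv by (simp add: inner_diff_left algebra_simps)
  finally show ?thesis using real by simp
next
  case PInf
  show ?thesis
  proof (cases t)
    case 0
    have "S = 0" unfolding S_def 0 sdapd_s by simp
    then have "v = 0" unfolding v_def by simp
    then show ?thesis using 0 PInf unfolding sd_phi_def Bsum_def by simp
  next
    case (Suc t')
    have B: "Bsum \<beta> t > 0" unfolding Bsum_def Suc using bpos by (intro sum_pos) auto
    have "(\<Sum>k<t. ereal (\<beta> k) * (g x + ereal (sd_ybar A g f \<eta> \<tau> \<beta> x0 y0 p k \<bullet> (A *v x) / real CARD('n)))) = \<infinity>"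
    proof -
      have "ereal (\<beta> 0) * (g x + ereal (sd_ybar A g f \<eta> \<tau> \<beta> x0 y0 p 0 \<bullet> (A *v x) / real CARD('n))) = \<infinity>"
        using PInf spec[OF bpos, of 0] by simp
      moreover have "(0::nat) \<in> {..<t}" using Suc by simp
      ultimately show ?thesis unfolding sum_Pinfty by blast
    qed
    then have "sd_phi A g f \<eta> \<tau> \<beta> x0 y0 p t x = \<infinity>" unfolding sd_phi_def by simp
    moreover have "ereal (Bsum \<beta> t) * g x = \<infinity>" using B PInf by simp
    ultimately show ?thesis by simp
  qed
next
  case MInf then show ?thesis using nm by simp
qed


theorem lemma3p2:
  fixes A :: "(real^('d::finite)^('n::finite))"
    and f :: "'n \<Rightarrow> real \<Rightarrow> real"
    and g :: "(real^'d) \<Rightarrow> ereal"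
    and \<gamma> \<mu> \<eta> \<tau> :: real
    and \<beta> :: "nat \<Rightarrow> real"
    and x0 :: "(real^'d)" and y0 :: "(real^'n)"
    and ii :: "nat \<Rightarrow> 'n"
    and t :: nat
  assumes "\<gamma> > 0" and "\<mu> > 0" and "\<eta> > 0" and "\<tau> > 0" and "\<forall>k. \<beta> k > 0"
    and f_convex: "\<forall>i. convex_on UNIV (f i)"
    and f_smooth: "\<forall>i. smooth_fun (1 / \<gamma>) (f i)"
    and g_range: "\<forall>x. g x \<noteq> -\<infinity>"
    and g_proper: "\<exists>x. g x \<noteq> \<infinity>"
    and g_closed: "closed_fun g"
    and g_sc: "strongly_convex_ext \<mu> g"
    and step: "\<eta> * (1 + Bsum \<beta> t * \<mu>) \<ge> \<beta> t"
  shows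
    "(let n = real CARD('n);
          Rbar = Max (range (\<lambda>i. norm (A $ i)));
          P = (\<lambda>j. ii(t := j));
          E = (\<lambda>Z. (\<Sum>j\<in>UNIV. Z (P j)) / ereal n);
          xb = sd_xbar A g f \<eta> \<tau> \<beta> x0 y0 ii t
      in E (\<lambda>p. sd_phistar A g f \<eta> \<tau> \<beta> x0 y0 p (Suc t) - sd_phistar A g f \<eta> \<tau> \<beta> x0 y0 p t)
         \<ge> ereal (\<beta> t) * E (\<lambda>p. g xb + ereal (sd_ybar A g f \<eta> \<tau> \<beta> x0 y0 p t \<bullet> (A *v xb) / n))
           - ereal (Rbar ^ 2 * \<beta> t * \<eta> / 2)
             * E (\<lambda>p. ereal (norm (sd_y A g f \<eta> \<tau> \<beta> x0 y0 p (Suc t) - sd_y A g f \<eta> \<tau> \<beta> x0 y0 p t) ^ 2)))"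
proof -
  have mu0: "\<mu> \<ge> 0" using assms(2) by simp
  have eta: "\<eta> > 0" using assms(3) .
  have bpos: "\<forall>k. \<beta> k > 0" using assms(5) .
  define n where "n = real CARD('n)"
  have np: "n > 0" unfolding n_def by simp
  define X where "X = sd_x A g f \<eta> \<tau> \<beta> x0 y0 ii t"
  define Y where "Y = sd_y A g f \<eta> \<tau> \<beta> x0 y0 ii t"
  define xb where "xb = sd_xbar A g f \<eta> \<tau> \<beta> x0 y0 ii t"
  define S where "S = snd (snd (sdapd A g f \<eta> \<tau> \<beta> x0 y0 ii t))"
  define v where "v = (1 / real CARD('n)) *\<^sub>R (transpose A *v S)"
  define w where "w = x0 - v"
  define C where "C = x0 \<bullet> v - norm v^2/2"
  define B where "B = Bsum \<beta> t"
  define \<sigma> where "\<sigma> = 1 + B * \<mu>"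
  define Rb where "Rb = Max (range (\<lambda>i. norm (A $ i)))"
  define K where "K = Rb ^ 2 * \<beta> t * \<eta> / 2"
  obtain x1 where "g x1 \<noteq> \<infinity>" using g_proper by auto
  then obtain r1 where g1: "g x1 = ereal r1" using g_range by (cases "g x1") auto
  have B0: "B \<ge> 0" unfolding B_def Bsum_def using bpos by (intro sum_nonneg) (auto intro: less_imp_le)
  have Xmin: "\<forall>z. ereal B * g X + ereal (norm (X - w)^2/2) \<le> ereal B * g z + ereal (norm (z - w)^2/2)"
  proof (cases t)
    case 0
    have "S = 0" unfolding S_def 0 by simp
    then have "w = x0" unfolding w_def v_def by simp
    moreover have "X = x0" unfolding X_def 0 sd_x_def by simp
    moreover have "B = 0" unfolding B_def Bsum_def 0 by simp
    ultimately show ?thesis by (simp add: zero_ereal_def[symmetric])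
  next
    case (Suc t')
    have Bp: "B > 0" unfolding B_def Bsum_def Suc using bpos by (intro sum_pos) auto
    have Xp: "X = prox (\<lambda>v. ereal B * g v) w"
      unfolding X_def Suc B_def w_def v_def S_def by (rule sdapd_Suc_facts(3))
    have "\<exists>z. \<forall>w'. ereal B * g z + ereal (norm (z - w)^2/2) \<le> ereal B * g w' + ereal (norm (w' - w)^2/2)"
      by (rule prox_exists[OF g_closed g_range g_proper g_sc mu0 Bp])
    then show ?thesis unfolding Xp prox_def by (rule someI_ex)
  qed
  have "ereal B * g X + ereal (norm (X - w)^2/2) \<le> ereal (B * r1 + norm (x1 - w)^2/2)"
    using Xmin g1 by (metis plus_ereal.simps(1) times_ereal.simps(1))
  then have XF: "ereal B * g X \<noteq> \<infinity>" by auto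
  have "ereal B * g X \<noteq> -\<infinity>" using B0 g_range by (cases "g X"; cases "B = 0") auto
  then obtain fX where fX: "ereal B * g X = ereal fX" using XF by (cases "ereal B * g X") auto
  have growX: "ereal B * g x + ereal (norm (x - w)^2/2)
      \<ge> ereal B * g X + ereal (norm (X - w)^2/2) + ereal ((1 + B*\<mu>)/2 * norm (x - X)^2)" for x
    by (rule growth[OF g_sc mu0 B0 g_range XF Xmin])
  have rep: "sd_phi A g f \<eta> \<tau> \<beta> x0 y0 q t x = ereal B * g x + ereal (norm (x - w)^2/2) + ereal C"
    if "\<forall>k<t. q k = ii k" for q x
  proof -
    have "sdapd A g f \<eta> \<tau> \<beta> x0 y0 q t = sdapd A g f \<eta> \<tau> \<beta> x0 y0 ii t"
      using that by (rule sdapd_indep)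
    then show ?thesis using sd_phi_rep[OF bpos, of g x A f \<eta> \<tau> x0 y0 q t] g_range
      unfolding B_def w_def v_def C_def S_def by simp
  qed
  define \<Phi>s where "\<Phi>s = fX + norm (X - w)^2/2 + C"
  have phi_low: "sd_phi A g f \<eta> \<tau> \<beta> x0 y0 q t x \<ge> ereal (\<Phi>s + \<sigma>/2 * norm (x - X)^2)"
    if "\<forall>k<t. q k = ii k" for q x
  proof -
    have "ereal B * g x + ereal (norm (x - w)^2/2) + ereal C
        \<ge> ereal B * g X + ereal (norm (X - w)^2/2) + ereal ((1 + B*\<mu>)/2 * norm (x - X)^2) + ereal C"
      using growX[of x] by (rule add_right_mono)
    then show ?thesis unfolding rep[OF that] fX \<Phi>s_def \<sigma>_def by (simp add: algebra_simps)
  qed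
  have phistar_t: "sd_phistar A g f \<eta> \<tau> \<beta> x0 y0 q t = ereal \<Phi>s" if "\<forall>k<t. q k = ii k" for q
  proof (rule antisym)
    have "sd_phi A g f \<eta> \<tau> \<beta> x0 y0 q t X = ereal \<Phi>s"
      unfolding rep[OF that] fX \<Phi>s_def by simp
    then show "sd_phistar A g f \<eta> \<tau> \<beta> x0 y0 q t \<le> ereal \<Phi>s"
      unfolding sd_phistar_def by (metis INF_lower UNIV_I)
    show "ereal \<Phi>s \<le> sd_phistar A g f \<eta> \<tau> \<beta> x0 y0 q t"
      unfolding sd_phistar_def
    proof (rule INF_greatest)
      fix x
      have "\<sigma>/2 * norm (x - X)^2 \<ge> 0" unfolding \<sigma>_def using B0 mu0 by simp
      then have "ereal \<Phi>s \<le> ereal (\<Phi>s + \<sigma>/2 * norm (x - X)^2)" by simp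
      then show "ereal \<Phi>s \<le> sd_phi A g f \<eta> \<tau> \<beta> x0 y0 q t x" using phi_low[OF that, of x] by (rule order_trans)
    qed
  qed
  define u where "u = X - (\<eta> / n) *\<^sub>R (transpose A *v Y)"
  have xb_eq: "xb = prox (\<lambda>v. ereal \<eta> * g v) u"
    unfolding xb_def sd_xbar_def u_def X_def Y_def n_def by simp
  have xbmin: "\<forall>z. ereal \<eta> * g xb + ereal (norm (xb - u)^2/2) \<le> ereal \<eta> * g z + ereal (norm (z - u)^2/2)"
  proof -
    have "\<exists>z. \<forall>w'. ereal \<eta> * g z + ereal (norm (z - u)^2/2) \<le> ereal \<eta> * g w' + ereal (norm (w' - u)^2/2)"
      by (rule prox_exists[OF g_closed g_range g_proper g_sc mu0 eta])
    then show ?thesis unfolding xb_eq prox_def by (rule someI_ex)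
  qed
  have "ereal \<eta> * g xb + ereal (norm (xb - u)^2/2) \<le> ereal (\<eta> * r1 + norm (x1 - u)^2/2)"
    using xbmin g1 by (metis plus_ereal.simps(1) times_ereal.simps(1))
  then have xbF: "ereal \<eta> * g xb \<noteq> \<infinity>" by auto
  then obtain gb where gb: "g xb = ereal gb" using g_range eta by (cases "g xb") auto
  have xbopt: "\<eta> * gx + norm (x - u)^2/2 \<ge> \<eta> * gb + norm (xb - u)^2/2 + norm (x - xb)^2/2"
    if gx: "g x = ereal gx" for x gx
  proof -
    have "ereal \<eta> * g x + ereal (norm (x - u)^2/2)
      \<ge> ereal \<eta> * g xb + ereal (norm (xb - u)^2/2) + ereal ((1 + \<eta>*\<mu>)/2 * norm (x - xb)^2)"
      by (rule growth[OF g_sc mu0 _ g_range xbF xbmin]) (use eta in simp)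
    then have "\<eta> * gx + norm (x - u)^2/2 \<ge> \<eta> * gb + norm (xb - u)^2/2 + (1 + \<eta>*\<mu>)/2 * norm (x - xb)^2"
      using gx gb by simp
    moreover have "(1 + \<eta>*\<mu>)/2 * norm (x - xb)^2 \<ge> norm (x - xb)^2/2"
      using eta mu0 by (simp add: field_simps)
    ultimately show ?thesis by linarith
  qed
  have Rb: "norm (A $ i) \<le> Rb" for i unfolding Rb_def by (rule Max_ge) auto
  have stp: "\<beta> t \<le> \<eta> * \<sigma>" using step unfolding \<sigma>_def B_def by simp
  have perj: "\<exists>a. sd_phistar A g f \<eta> \<tau> \<beta> x0 y0 (ii(t:=j)) (Suc t) = ereal a \<and>
      a - \<Phi>s \<ge> \<beta> t * (gb + sd_ybar A g f \<eta> \<tau> \<beta> x0 y0 (ii(t:=j)) t \<bullet> (A *v xb) / n)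
        - K * norm (sd_y A g f \<eta> \<tau> \<beta> x0 y0 (ii(t:=j)) (Suc t) - sd_y A g f \<eta> \<tau> \<beta> x0 y0 (ii(t:=j)) t)^2" for j
  proof -
    define p where "p = ii(t:=j)"
    have agree: "\<forall>k<t. p k = ii k" unfolding p_def by simp
    have "sdapd A g f \<eta> \<tau> \<beta> x0 y0 p t = sdapd A g f \<eta> \<tau> \<beta> x0 y0 ii t"
      using agree by (rule sdapd_indep)
    then have Yp: "sd_y A g f \<eta> \<tau> \<beta> x0 y0 p t = Y" unfolding Y_def sd_y_def by simp
    define yb where "yb = sd_ybar A g f \<eta> \<tau> \<beta> x0 y0 p t"
    define Y' where "Y' = sd_y A g f \<eta> \<tau> \<beta> x0 y0 p (Suc t)"
    have ybe: "yb = Y + n *\<^sub>R (Y' - Y)" unfolding yb_def sd_ybar_def Y'_def Yp n_def ..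
    have single: "Y' $ i = Y $ i" if "i \<noteq> j" for i
      unfolding Y'_def Yp[symmetric] using that by (intro sdapd_Suc_facts(1)) (simp add: p_def)
    define L where "L = \<Phi>s + \<beta> t * (gb + yb \<bullet> (A *v xb) / n) - K * norm (Y' - Y)^2"
    have low: "sd_phi A g f \<eta> \<tau> \<beta> x0 y0 p (Suc t) x \<ge> ereal L" for x
    proof (cases "g x")
      case PInf
      have "sd_phi A g f \<eta> \<tau> \<beta> x0 y0 p t x \<noteq> -\<infinity>" using phi_low[OF agree, of x] by auto
      moreover have "ereal (\<beta> t) * (g x + ereal (yb \<bullet> (A *v x) / n)) = \<infinity>"
        using PInf spec[OF bpos, of t] by simp
      ultimately have "sd_phi A g f \<eta> \<tau> \<beta> x0 y0 p (Suc t) x = \<infinity>"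
        unfolding sd_phi_Suc yb_def n_def by simp
      then show ?thesis by simp
    next
      case MInf then show ?thesis using g_range by simp
    next
      case (real gx)
      have e1: "sd_phi A g f \<eta> \<tau> \<beta> x0 y0 p (Suc t) x
          = sd_phi A g f \<eta> \<tau> \<beta> x0 y0 p t x + ereal (\<beta> t * (gx + yb \<bullet> (A *v x) / n))"
        unfolding sd_phi_Suc yb_def n_def real by simp
      have e2: "sd_phi A g f \<eta> \<tau> \<beta> x0 y0 p t x + ereal (\<beta> t * (gx + yb \<bullet> (A *v x) / n))
          \<ge> ereal (\<Phi>s + \<sigma>/2 * norm (x - X)^2) + ereal (\<beta> t * (gx + yb \<bullet> (A *v x) / n))"
        using phi_low[OF agree, of x] by (rule add_right_mono)
      have e3: "\<sigma>/2 * norm (x - X)^2 + \<beta> t * (gx + yb \<bullet> (A *v x) / n)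
          \<ge> \<beta> t * (gb + yb \<bullet> (A *v xb) / n) - Rb^2 * \<beta> t * \<eta> / 2 * norm (Y' - Y)^2"
        by (rule core[OF eta spec[OF bpos, of t] stp np xbopt[OF real] u_def ybe single Rb])
      have e4: "L \<le> \<Phi>s + \<sigma>/2 * norm (x - X)^2 + \<beta> t * (gx + yb \<bullet> (A *v x) / n)"
        using e3 unfolding L_def K_def by linarith
      have "ereal L \<le> ereal (\<Phi>s + \<sigma>/2 * norm (x - X)^2) + ereal (\<beta> t * (gx + yb \<bullet> (A *v x) / n))"
        using e4 by simp
      also note e2
      finally show ?thesis unfolding e1 .
    qed
    have lowstar: "sd_phistar A g f \<eta> \<tau> \<beta> x0 y0 p (Suc t) \<ge> ereal L"
      unfolding sd_phistar_def by (rule INF_greatest) (rule low)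
    have "sd_phi A g f \<eta> \<tau> \<beta> x0 y0 p (Suc t) x1
        = ereal B * g x1 + ereal (norm (x1 - w)^2/2) + ereal C + ereal (\<beta> t) * (g x1 + ereal (yb \<bullet> (A *v x1) / n))"
      unfolding sd_phi_Suc rep[OF agree] yb_def n_def ..
    also have "\<dots> = ereal (B * r1 + norm (x1 - w)^2/2 + C + \<beta> t * (r1 + yb \<bullet> (A *v x1) / n))"
      unfolding g1 by simp
    finally have "sd_phistar A g f \<eta> \<tau> \<beta> x0 y0 p (Suc t) \<le> ereal (B * r1 + norm (x1 - w)^2/2 + C + \<beta> t * (r1 + yb \<bullet> (A *v x1) / n))"
      unfolding sd_phistar_def by (metis INF_lower UNIV_I)
    then obtain a where a: "sd_phistar A g f \<eta> \<tau> \<beta> x0 y0 p (Suc t) = ereal a"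
      using lowstar by (cases "sd_phistar A g f \<eta> \<tau> \<beta> x0 y0 p (Suc t)") auto
    have "a \<ge> L" using lowstar a by simp
    then show ?thesis unfolding p_def[symmetric] using a unfolding L_def yb_def Y'_def Yp by (intro exI[of _ a]) simp
  qed
  then obtain a where a: "\<And>j. sd_phistar A g f \<eta> \<tau> \<beta> x0 y0 (ii(t:=j)) (Suc t) = ereal (a j)"
    and aineq: "\<And>j. a j - \<Phi>s \<ge> \<beta> t * (gb + sd_ybar A g f \<eta> \<tau> \<beta> x0 y0 (ii(t:=j)) t \<bullet> (A *v xb) / n)
        - K * norm (sd_y A g f \<eta> \<tau> \<beta> x0 y0 (ii(t:=j)) (Suc t) - sd_y A g f \<eta> \<tau> \<beta> x0 y0 (ii(t:=j)) t)^2"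
    by metis
  have pt: "sd_phistar A g f \<eta> \<tau> \<beta> x0 y0 (ii(t:=j)) t = ereal \<Phi>s" for j
    by (rule phistar_t) simp
  define Q where "Q j = gb + sd_ybar A g f \<eta> \<tau> \<beta> x0 y0 (ii(t:=j)) t \<bullet> (A *v xb) / n" for j
  define N where "N j = norm (sd_y A g f \<eta> \<tau> \<beta> x0 y0 (ii(t:=j)) (Suc t) - sd_y A g f \<eta> \<tau> \<beta> x0 y0 (ii(t:=j)) t)^2" for j
  have L1: "(\<Sum>j\<in>UNIV. sd_phistar A g f \<eta> \<tau> \<beta> x0 y0 (ii(t:=j)) (Suc t) - sd_phistar A g f \<eta> \<tau> \<beta> x0 y0 (ii(t:=j)) t) / ereal n
      = ereal ((\<Sum>j\<in>UNIV. a j - \<Phi>s) / n)"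
    using np by (simp add: a pt)
  have R1: "(\<Sum>j\<in>UNIV. g xb + ereal (sd_ybar A g f \<eta> \<tau> \<beta> x0 y0 (ii(t:=j)) t \<bullet> (A *v xb) / n)) / ereal n
      = ereal ((\<Sum>j\<in>UNIV. Q j) / n)"
    using np by (simp add: gb Q_def)
  have R2: "(\<Sum>j\<in>UNIV. ereal (N j)) / ereal n = ereal ((\<Sum>j\<in>UNIV. N j) / n)"
    using np by simp
  have "(\<Sum>j\<in>UNIV. a j - \<Phi>s) \<ge> (\<Sum>j\<in>UNIV. \<beta> t * Q j - K * N j)"
    using aineq unfolding Q_def N_def by (intro sum_mono) auto
  also have "(\<Sum>j\<in>UNIV. \<beta> t * Q j - K * N j) = \<beta> t * (\<Sum>j\<in>UNIV. Q j) - K * (\<Sum>j\<in>UNIV. N j)"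
    by (simp add: sum_subtractf sum_distrib_left)
  finally have "(\<Sum>j\<in>UNIV. a j - \<Phi>s) / n \<ge> (\<beta> t * (\<Sum>j\<in>UNIV. Q j) - K * (\<Sum>j\<in>UNIV. N j)) / n"
    using np by (simp add: divide_right_mono)
  then have fin: "(\<Sum>j\<in>UNIV. a j - \<Phi>s) / n \<ge> \<beta> t * ((\<Sum>j\<in>UNIV. Q j) / n) - K * ((\<Sum>j\<in>UNIV. N j) / n)"
    by (simp add: diff_divide_distrib)
  show ?thesis
    unfolding Let_def n_def[symmetric] Rb_def[symmetric] K_def[symmetric] xb_def[symmetric]
    unfolding L1 R1 N_def[symmetric] R2
    using fin by simp
qed

end
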